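(* Fix reals $a<b$, $S=T\cap[a,b]$, a natural number $m\ge1$, points $q_1,\ldots,q_r\in\mathbf M$, and $-\infty\le\alpha_i\le\beta_i\le\infty$ ($i=1,\ldots,r$). Let $\Pi_1=\{x\in\mathbf M:\alpha_i\le\tau(x,q_i)\le\beta_i,\ i=1,\ldots,r\}$ and let $\mathbf\Pi\subseteq\Pi_1$. Fix $\ell$ and $a=u_1<\cdots<u_{\ell+1}=b$, and let $\mathcal A$ be a set of constraints satisfied by $(|C|,(x_i^{(k)}(C)))$ for every $S$-code $C\subset\mathbf\Pi$. Let $c^*(m)$ be the supremum of $c$ over real variables $c$, $(x_i^{(k)})_{1\le i\le\ell,0\le k\le 2m-1}$, $(y_i^{(k)})_{1\le i\le r,0\le k\le 2m-1}$ with $y_1^{(0)}=\cdots=y_r^{(0)}=c$, subject to: (7) $H_m(x_i^{(0)},\ldots,x_i^{(2m-1)},[u_i,u_{i+1}])\succeq0$, $i=1,\ldots,\ell$; (8) the constraints $\mathcal A$; (9) for $k=0,\ldots,2m-1$ the $(r+1)\times(r+1)$ symmetric matrix $G_k$ with entries $(G_k)_{ij}=\Phi_k(\tau(q_i,q_j))$ for $i,j\le r$, $(G_k)_{i,r+1}=(G_k)_{r+1,i}=\sum_{d=0}^k p_{kd}y_i^{(d)}$ for $i\le r$, and $(G_k)_{r+1,r+1}=c+\sum_{d=0}^k p_{kd}\sum_{i=1}^\ell x_i^{(d)}$, is positive semidefinite; (10) $H_m(y_i^{(0)},\ldots,y_i^{(2m-1)},[\alpha_i,\beta_i])\succeq0$,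 $i=1,\ldots,r$ (with the block $F_m^+(\alpha_i)$ omitted if $\alpha_i=-\infty$ and $F_m^-(\beta_i)$ omitted if $\beta_i=\infty$). Then $A(\mathbf\Pi,S)\le c^*(m)$.
   Context: $\mathbf M$ is a 2-point-homogeneous space with associated real function $\tau(x,y)$, $\tau_0:=\tau(x,x)$, $T=\{\tau(x,y):x,y\in\mathbf M\}$, and zonal spherical functions $\Phi_k(t)=\sum_{d=0}^k p_{kd}t^d$ assumed to be real polynomials of degree $k$ with $\Phi_k(\tau_0)=1$ such that for every finite $\{x_1,\ldots,x_N\}\subset\mathbf M$ and $k\ge0$ the matrix $(\Phi_k(\tau(x_i,x_j)))$ is positive semidefinite. An $S$-code is a finite $C\subset\mathbf M$ with $\tau(x,y)\in S$ for all distinct $x,y\in C$; $A(\mathbf\Pi,S)$ is the largest cardinality of an $S$-code contained in $\mathbf\Pi$. For an $S$-code $C=\{z_1,\ldots,z_c\}$, $x_i^{(k)}(C):=\sum\tau(z_p,z_q)^k$ over ordered pairs $p\ne q$ with $\tau(z_p,z_q)\in[u_i,u_{i+1})$ ($i<\ell$), resp. $\in[u_\ell,b]$ ($i=\ell$); $\tau^0:=1$. For reals $s_0,\ldots,s_{2m-1}$ and $\alpha<\beta$: $R_m=(s_{i+j-2})_{i,j=1}^m$, $F_m^+(\alpha)=(s_{i+j-1}-\alpha s_{i+j-2})$, $F_m^-(\beta)=(\beta s_{i+j-2}-s_{i+j-1})$, $H_m(s_0,\ldots,s_{2m-1},[\alpha,\beta])=\operatorname{diag}(R_m,F_m^+(\alpha),F_m^-(\beta))$.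 *)

theory Defs
  imports Complex_Main "HOL-Library.Extended_Real"
begin

definition psd :: "nat \<Rightarrow> (nat \<Rightarrow> nat \<Rightarrow> real) \<Rightarrow> bool" where
  "psd n A \<longleftrightarrow> (\<forall>i<n. \<forall>j<n. A i j = A j i) \<and>
                 (\<forall>v::nat \<Rightarrow> real. 0 \<le> (\<Sum>i<n. \<Sum>j<n. v i * A i j * v j))"

definition block_diag :: "nat \<Rightarrow> (nat \<Rightarrow> nat \<Rightarrow> real) list \<Rightarrow> nat \<Rightarrow> nat \<Rightarrow> real" where
  "block_diag m L = (\<lambda>i j. if i div m = j div m then (L ! (i div m)) (i mod m) (j mod m) else 0)"

text \<open>Hankel blocks, 0-indexed (entry (i,j) here is entry (i+1,j+1) of the paper).\<close>
definition R_mat :: "(nat \<Rightarrow> real) \<Rightarrow> nat \<Rightarrow> nat \<Rightarrow> real" where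
  "R_mat s = (\<lambda>i j. s (i + j))"
definition Fplus :: "(nat \<Rightarrow> real) \<Rightarrow> real \<Rightarrow> nat \<Rightarrow> nat \<Rightarrow> real" where
  "Fplus s \<alpha> = (\<lambda>i j. s (i + j + 1) - \<alpha> * s (i + j))"
definition Fminus :: "(nat \<Rightarrow> real) \<Rightarrow> real \<Rightarrow> nat \<Rightarrow> nat \<Rightarrow> real" where
  "Fminus s \<beta> = (\<lambda>i j. \<beta> * s (i + j) - s (i + j + 1))"

definition H_blocks :: "(nat \<Rightarrow> real) \<Rightarrow> ereal \<Rightarrow> ereal \<Rightarrow> (nat \<Rightarrow> nat \<Rightarrow> real) list" where
  "H_blocks s \<alpha> \<beta> = [R_mat s]
      @ (if \<alpha> = -\<infinity> then [] else [Fplus s (real_of_ereal \<alpha>)])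
      @ (if \<beta> = \<infinity> then [] else [Fminus s (real_of_ereal \<beta>)])"

definition H_psd :: "nat \<Rightarrow> (nat \<Rightarrow> real) \<Rightarrow> ereal \<Rightarrow> ereal \<Rightarrow> bool" where
  "H_psd m s \<alpha> \<beta> = psd (m * length (H_blocks s \<alpha> \<beta>)) (block_diag m (H_blocks s \<alpha> \<beta>))"

definition Phi :: "(nat \<Rightarrow> nat \<Rightarrow> real) \<Rightarrow> nat \<Rightarrow> real \<Rightarrow> real" where
  "Phi p k t = (\<Sum>d\<le>k. p k d * t ^ d)"

definition S_code :: "('a \<Rightarrow> 'a \<Rightarrow> real) \<Rightarrow> real set \<Rightarrow> 'a set \<Rightarrow> bool" where
  "S_code \<tau> S C \<longleftrightarrow> finite C \<and> (\<forall>x\<in>C. \<forall>y\<in>C. x \<noteq> y \<longrightarrow> \<tau> x y \<in> S)"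

definition A_max :: "('a \<Rightarrow> 'a \<Rightarrow> real) \<Rightarrow> 'a set \<Rightarrow> real set \<Rightarrow> ereal" where
  "A_max \<tau> \<Pi> S = Sup {ereal (real (card C)) | C. S_code \<tau> S C \<and> C \<subseteq> \<Pi>}"

definition xcode :: "('a \<Rightarrow> 'a \<Rightarrow> real) \<Rightarrow> (nat \<Rightarrow> real) \<Rightarrow> nat \<Rightarrow> real \<Rightarrow> 'a set \<Rightarrow> nat \<Rightarrow> nat \<Rightarrow> real" where
  "xcode \<tau> u l b C i k =
     (\<Sum>zw \<in> {(z, w). z \<in> C \<and> w \<in> C \<and> z \<noteq> w \<and>
                 (if i < l then u i \<le> \<tau> z w \<and> \<tau> z w < u (i + 1)
                  else u l \<le> \<tau> z w \<and> \<tau> z w \<le> b)}.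
        (\<tau> (fst zw) (snd zw)) ^ k)"

text \<open>Restriction of a variable family to indices 1..l, 0..2m-1 (the variables the
  constraint set A speaks about).\<close>
definition restr :: "nat \<Rightarrow> nat \<Rightarrow> (nat \<Rightarrow> nat \<Rightarrow> real) \<Rightarrow> nat \<Rightarrow> nat \<Rightarrow> real" where
  "restr l m x = (\<lambda>i k. if 1 \<le> i \<and> i \<le> l \<and> k < 2 * m then x i k else 0)"

text \<open>The matrix G_k (0-indexed, size r+1); q, y indexed from 1.\<close>
definition G_mat :: "('a \<Rightarrow> 'a \<Rightarrow> real) \<Rightarrow> (nat \<Rightarrow> nat \<Rightarrow> real) \<Rightarrow> nat \<Rightarrow> (nat \<Rightarrow> 'a) \<Rightarrow> nat
    \<Rightarrow> real \<Rightarrow> (nat \<Rightarrow> nat \<Rightarrow> real) \<Rightarrow> (nat \<Rightarrow> nat \<Rightarrow> real) \<Rightarrow> nat \<Rightarrow> nat \<Rightarrow> nat \<Rightarrow> real" where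
  "G_mat \<tau> p r q l c x y k = (\<lambda>i j.
     if i < r \<and> j < r then Phi p k (\<tau> (q (Suc i)) (q (Suc j)))
     else if i < r then (\<Sum>d\<le>k. p k d * y (Suc i) d)
     else if j < r then (\<Sum>d\<le>k. p k d * y (Suc j) d)
     else c + (\<Sum>d\<le>k. p k d * (\<Sum>i'=1..l. x i' d)))"

definition feasible :: "('a \<Rightarrow> 'a \<Rightarrow> real) \<Rightarrow> (nat \<Rightarrow> nat \<Rightarrow> real) \<Rightarrow> nat \<Rightarrow> (nat \<Rightarrow> 'a)
    \<Rightarrow> (nat \<Rightarrow> ereal) \<Rightarrow> (nat \<Rightarrow> ereal) \<Rightarrow> nat \<Rightarrow> (nat \<Rightarrow> real)
    \<Rightarrow> (real \<Rightarrow> (nat \<Rightarrow> nat \<Rightarrow> real) \<Rightarrow> bool) \<Rightarrow> nat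
    \<Rightarrow> real \<Rightarrow> (nat \<Rightarrow> nat \<Rightarrow> real) \<Rightarrow> (nat \<Rightarrow> nat \<Rightarrow> real) \<Rightarrow> bool" where
  "feasible \<tau> p r q \<alpha> \<beta> l u Acon m c x y \<longleftrightarrow>
     (\<forall>i\<in>{1..r}. y i 0 = c) \<and>
     (\<forall>i\<in>{1..l}. H_psd m (x i) (ereal (u i)) (ereal (u (i + 1)))) \<and>
     Acon c (restr l m x) \<and>
     (\<forall>k<2 * m. psd (r + 1) (G_mat \<tau> p r q l c x y k)) \<and>
     (\<forall>i\<in>{1..r}. H_psd m (y i) (\<alpha> i) (\<beta> i))"

definition c_star :: "('a \<Rightarrow> 'a \<Rightarrow> real) \<Rightarrow> (nat \<Rightarrow> nat \<Rightarrow> real) \<Rightarrow> nat \<Rightarrow> (nat \<Rightarrow> 'a)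
    \<Rightarrow> (nat \<Rightarrow> ereal) \<Rightarrow> (nat \<Rightarrow> ereal) \<Rightarrow> nat \<Rightarrow> (nat \<Rightarrow> real)
    \<Rightarrow> (real \<Rightarrow> (nat \<Rightarrow> nat \<Rightarrow> real) \<Rightarrow> bool) \<Rightarrow> nat \<Rightarrow> ereal" where
  "c_star \<tau> p r q \<alpha> \<beta> l u Acon m =
     Sup {ereal c | c. \<exists>x y. feasible \<tau> p r q \<alpha> \<beta> l u Acon m c x y}"

end

theory Submission
  imports Defs
begin

lemma moment_psd:
  assumes "finite E" "\<And>e. e \<in> E \<Longrightarrow> 0 \<le> g e"
  shows "psd n (\<lambda>i j. \<Sum>e\<in>E. g e * f e ^ (i + j))"
  unfolding psd_def
proof (intro conjI allI impI)
  show "\<And>i j. (\<Sum>e\<in>E. g e * f e ^ (i + j)) = (\<Sum>e\<in>E. g e * f e ^ (j + i))" by (simp add: add.commute)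
  fix v :: "nat \<Rightarrow> real"
  have "(\<Sum>i<n. \<Sum>j<n. v i * (\<Sum>e\<in>E. g e * f e ^ (i + j)) * v j)
      = (\<Sum>e\<in>E. g e * (\<Sum>i<n. v i * f e ^ i)^2)"
    by (simp add: power2_eq_square sum_product sum_distrib_left sum_distrib_right power_add mult_ac sum.swap[of _ E])
  also have "\<dots> \<ge> 0" using assms by (intro sum_nonneg mult_nonneg_nonneg) auto
  finally show "0 \<le> (\<Sum>i<n. \<Sum>j<n. v i * (\<Sum>e\<in>E. g e * f e ^ (i + j)) * v j)" .
qed

lemma shift_sum: fixes h :: "nat \<Rightarrow> real" shows "sum h {k..<k+m} = (\<Sum>i<m. h (k+i))"
  by (induction m) (simp_all add: add.commute)

lemma block_sum: fixes h :: "nat \<Rightarrow> real" and n m :: nat shows "(\<Sum>i<n*m. h i) = (\<Sum>b<n. \<Sum>i<m. h (b*m+i)::real)"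
proof -
  have "(\<Sum>i<n*m. h i) = (\<Sum>b<n. sum h {b*m..<b*m+m})" using sum.nat_group[of h m n] by simp
  also have "\<dots> = (\<Sum>b<n. \<Sum>i<m. h (b*m+i))"
    by (simp add: shift_sum)
  finally show ?thesis .
qed

lemma block_diag_psd:
  assumes m: "0 < m" and L: "\<And>B. B \<in> set L \<Longrightarrow> psd m B"
  shows "psd (m * length L) (block_diag m L)"
  unfolding psd_def
proof (intro conjI allI impI)
  fix i j assume i: "i < m * length L" and j: "j < m * length L"
  show "block_diag m L i j = block_diag m L j i"
  proof (cases "i div m = j div m")
    case True
    have "i div m < length L" using i m by (simp add: div_less_iff_less_mult mult.commute)
    then have "psd m (L ! (i div m))" using L by simp
    then show ?thesis using True m unfolding block_diag_def psd_def by simp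
  qed (simp add: block_diag_def)
next
  fix v :: "nat \<Rightarrow> real"
  let ?n = "length L"
  have bd: "block_diag m L (b*m+i) (b'*m+j) = (if b = b' then (L!b) i j else 0)"
    if "i < m" "j < m" for b b' i j using that m by (simp add: block_diag_def)
  have "(\<Sum>i<m * ?n. \<Sum>j<m * ?n. v i * block_diag m L i j * v j)
     = (\<Sum>b<?n. \<Sum>i<m. \<Sum>b'<?n. \<Sum>j<m. v (b*m+i) * block_diag m L (b*m+i) (b'*m+j) * v (b'*m+j))"
    by (simp add: block_sum mult.commute[of m])
  also have "\<dots> = (\<Sum>b<?n. \<Sum>i<m. \<Sum>b'<?n. \<Sum>j<m. if b = b' then v (b*m+i) * (L!b) i j * v (b*m+j) else 0)"
    by (intro sum.cong refl) (simp add: bd)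
  also have "\<dots> = (\<Sum>b<?n. \<Sum>i<m. \<Sum>j<m. v (b*m+i) * (L!b) i j * v (b*m+j))"
    by (subst sum.swap) (simp add: sum.delta)
  also have "\<dots> \<ge> 0"
  proof (rule sum_nonneg)
    fix b assume "b \<in> {..<?n}"
    then have "psd m (L!b)" using L by simp
    then have "\<forall>w. 0 \<le> (\<Sum>i<m. \<Sum>j<m. w i * (L!b) i j * w j)" unfolding psd_def by blast
    from this[rule_format, of "\<lambda>i. v (b*m+i)"]
    show "0 \<le> (\<Sum>i<m. \<Sum>j<m. v (b*m+i) * (L!b) i j * v (b*m+j))" by simp
  qed
  finally show "0 \<le> (\<Sum>i<m * ?n. \<Sum>j<m * ?n. v i * block_diag m L i j * v j)" .
qed

lemma moment_H:
  assumes m: "0 < m" and E: "finite E" and s: "s = (\<lambda>k. \<Sum>e\<in>E. f e ^ k)"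
    and lo: "\<alpha> \<noteq> -\<infinity> \<Longrightarrow> \<forall>e\<in>E. real_of_ereal \<alpha> \<le> f e"
    and hi: "\<beta> \<noteq> \<infinity> \<Longrightarrow> \<forall>e\<in>E. f e \<le> real_of_ereal \<beta>"
  shows "H_psd m s \<alpha> \<beta>"
  unfolding H_psd_def
proof (rule block_diag_psd[OF m])
  have R: "psd m (R_mat s)"
  proof -
    have "R_mat s = (\<lambda>i j. \<Sum>e\<in>E. 1 * f e ^ (i + j))" by (simp add: R_mat_def s)
    then show ?thesis using moment_psd[OF E, of "\<lambda>_. 1"] by simp
  qed
  have F1: "psd m (Fplus s (real_of_ereal \<alpha>))" if "\<alpha> \<noteq> -\<infinity>"
  proof -
    have "Fplus s (real_of_ereal \<alpha>) = (\<lambda>i j. \<Sum>e\<in>E. (f e - real_of_ereal \<alpha>) * f e ^ (i + j))"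
      by (simp add: Fplus_def s sum_distrib_left sum_subtractf[symmetric] algebra_simps)
    then show ?thesis using moment_psd[OF E, of "\<lambda>e. f e - real_of_ereal \<alpha>"] lo[OF that] by simp
  qed
  have F2: "psd m (Fminus s (real_of_ereal \<beta>))" if "\<beta> \<noteq> \<infinity>"
  proof -
    have "Fminus s (real_of_ereal \<beta>) = (\<lambda>i j. \<Sum>e\<in>E. (real_of_ereal \<beta> - f e) * f e ^ (i + j))"
      by (simp add: Fminus_def s sum_distrib_left sum_subtractf[symmetric] algebra_simps)
    then show ?thesis using moment_psd[OF E, of "\<lambda>e. real_of_ereal \<beta> - f e"] hi[OF that] by simp
  qed
  fix B assume "B \<in> set (H_blocks s \<alpha> \<beta>)"
  then show "psd m B" using R F1 F2 by (auto simp: H_blocks_def split: if_splits)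
qed

lemma group_sum:
  fixes G :: "'a \<Rightarrow> real"
  assumes "finite I"
  shows "(\<Sum>j\<in>I. G (pts j) * w j) = (\<Sum>y\<in>pts ` I. G y * (\<Sum>j\<in>{x\<in>I. pts x = y}. w j))"
  apply (subst sum.image_gen[OF assms, where g = pts])
  apply (intro sum.cong refl)
  apply (simp add: sum_distrib_left)
  done

lemma gram_nonneg:
  fixes \<tau> :: "'a \<Rightarrow> 'a \<Rightarrow> real" and pts :: "'b \<Rightarrow> 'a"
  assumes Phi_psd: "\<forall>N (xs :: nat \<Rightarrow> 'a). inj_on xs {..<N} \<longrightarrow> psd N (\<lambda>i j. Phi p k (\<tau> (xs i) (xs j)))"
    and I: "finite I"
  shows "0 \<le> (\<Sum>i\<in>I. \<Sum>j\<in>I. w i * Phi p k (\<tau> (pts i) (pts j)) * w j)"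
proof -
  define F where "F = (\<lambda>x y. Phi p k (\<tau> x y))"
  define V where "V = (\<lambda>y. \<Sum>j\<in>{x\<in>I. pts x = y}. w j)"
  define P where "P = pts ` I"
  have fP: "finite P" using I by (simp add: P_def)
  obtain xs where xs: "bij_betw xs {0..<card P} P" using ex_bij_betw_nat_finite[OF fP] by blast
  have "(\<Sum>i\<in>I. \<Sum>j\<in>I. w i * F (pts i) (pts j) * w j)
      = (\<Sum>i\<in>I. (\<Sum>j\<in>I. F (pts i) (pts j) * w j) * w i)"
    by (simp add: sum_distrib_left sum_distrib_right mult_ac)
  also have "\<dots> = (\<Sum>i\<in>I. (\<Sum>y\<in>P. F (pts i) y * V y) * w i)"
    unfolding P_def V_def by (simp add: group_sum[OF I])
  also have "\<dots> = (\<Sum>y'\<in>P. (\<Sum>y\<in>P. F y' y * V y) * V y')"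
    unfolding P_def V_def by (rule group_sum[OF I, where G = "\<lambda>y'. \<Sum>y\<in>pts ` I. F y' y * V y" for V])
  also have "\<dots> = (\<Sum>a\<in>{0..<card P}. (\<Sum>b\<in>{0..<card P}. F (xs a) (xs b) * V (xs b)) * V (xs a))"
  proof -
    have inner: "(\<Sum>b\<in>{0..<card P}. F y' (xs b) * V (xs b)) = (\<Sum>y\<in>P. F y' y * V y)" for y'
      using sum.reindex_bij_betw[OF xs, of "\<lambda>y. F y' y * V y"] by simp
    show ?thesis
      using sum.reindex_bij_betw[OF xs, of "\<lambda>y'. (\<Sum>y\<in>P. F y' y * V y) * V y'"] by (simp add: inner)
  qed
  also have "\<dots> = (\<Sum>a<card P. \<Sum>b<card P. V (xs a) * F (xs a) (xs b) * V (xs b))"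
    by (simp add: atLeast0LessThan sum_distrib_left sum_distrib_right mult_ac)
  also have "\<dots> \<ge> 0"
  proof -
    have "inj_on xs {..<card P}" using xs by (simp add: bij_betw_def atLeast0LessThan)
    from Phi_psd[rule_format, OF this] have "\<forall>v. 0 \<le> (\<Sum>a<card P. \<Sum>b<card P. v a * F (xs a) (xs b) * v b)"
      unfolding psd_def F_def by blast
    from this[rule_format, of "\<lambda>a. V (xs a)"] show ?thesis by simp
  qed
  finally show ?thesis unfolding F_def .
qed

definition Pset :: "('a \<Rightarrow> 'a \<Rightarrow> real) \<Rightarrow> (nat \<Rightarrow> real) \<Rightarrow> nat \<Rightarrow> real \<Rightarrow> 'a set \<Rightarrow> nat \<Rightarrow> ('a \<times> 'a) set" where
  "Pset \<tau> u l b C i = {(z, w). z \<in> C \<and> w \<in> C \<and> z \<noteq> w \<and>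
                 (if i < l then u i \<le> \<tau> z w \<and> \<tau> z w < u (i + 1)
                  else u l \<le> \<tau> z w \<and> \<tau> z w \<le> b)}"

lemma xcode_Pset: "xcode \<tau> u l b C i k = (\<Sum>zw\<in>Pset \<tau> u l b C i. \<tau> (fst zw) (snd zw) ^ k)"
  unfolding xcode_def Pset_def ..

lemma cover:
  fixes u :: "nat \<Rightarrow> real" and l :: nat and a b t :: real
  assumes u1: "u 1 = a" and ul: "u (l + 1) = b" and mono: "strict_mono_on {1..l + 1} u"
    and ab: "a < b" and t: "a \<le> t" "t \<le> b"
  shows "\<exists>i\<in>{1..l}. (if i < l then u i \<le> t \<and> t < u (i + 1) else u l \<le> t \<and> t \<le> b)"
proof -
  have l: "1 \<le> l" proof (rule ccontr) assume "\<not> 1 \<le> l" then have "l = 0" by simp then show False using u1 ul ab by simp qed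
  show ?thesis
  proof (cases "u l \<le> t")
    case True then show ?thesis using l t by (intro bexI[of _ l]) auto
  next
    case False
    define K where "K = {i\<in>{1..l}. u i \<le> t}"
    have fK: "finite K" and K1: "1 \<in> K" using l u1 t by (auto simp: K_def)
    define i where "i = Max K"
    have iK: "i \<in> K" using fK K1 i_def Max_in by blast
    then have i1: "1 \<le> i" "i \<le> l" "u i \<le> t" by (auto simp: K_def)
    have "i \<noteq> l" using False i1 by auto
    then have il: "i < l" using i1 by auto
    have "t < u (i + 1)"
    proof (rule ccontr)
      assume "\<not> t < u (i + 1)"
      then have "i + 1 \<in> K" using il by (auto simp: K_def)
      then have "i + 1 \<le> i" using fK i_def Max_ge by blast
      then show False by simp
    qed
    then show ?thesis using i1 il by (intro bexI[of _ i]) auto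
  qed
qed

lemma Pset_partition:
  assumes u1: "u 1 = a" and ul: "u (l + 1) = b" and mono: "strict_mono_on {1..l + 1} u"
    and ab: "a < b" and code: "\<forall>z\<in>C. \<forall>w\<in>C. z \<noteq> w \<longrightarrow> a \<le> \<tau> z w \<and> \<tau> z w \<le> b"
  shows "(\<Union>i\<in>{1..l}. Pset \<tau> u l b C i) = {(z, w). z \<in> C \<and> w \<in> C \<and> z \<noteq> w}"
    and "\<forall>i\<in>{1..l}. \<forall>j\<in>{1..l}. i \<noteq> j \<longrightarrow> Pset \<tau> u l b C i \<inter> Pset \<tau> u l b C j = {}"
proof -
  show "(\<Union>i\<in>{1..l}. Pset \<tau> u l b C i) = {(z, w). z \<in> C \<and> w \<in> C \<and> z \<noteq> w}"
  proof
    show "(\<Union>i\<in>{1..l}. Pset \<tau> u l b C i) \<subseteq> {(z, w). z \<in> C \<and> w \<in> C \<and> z \<noteq> w}"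
      by (auto simp: Pset_def)
    show "{(z, w). z \<in> C \<and> w \<in> C \<and> z \<noteq> w} \<subseteq> (\<Union>i\<in>{1..l}. Pset \<tau> u l b C i)"
    proof clarify
      fix z w assume zw: "z \<in> C" "w \<in> C" "z \<noteq> w"
      then have "a \<le> \<tau> z w" "\<tau> z w \<le> b" using code by auto
      from cover[OF u1 ul mono ab this] zw show "(z, w) \<in> (\<Union>i\<in>{1..l}. Pset \<tau> u l b C i)"
        by (auto simp: Pset_def)
    qed
  qed
  have disj: "Pset \<tau> u l b C i \<inter> Pset \<tau> u l b C j = {}" if ij: "i \<in> {1..l}" "j \<in> {1..l}" "i < j" for i j
  proof -
    have "u (i + 1) \<le> u j"
    proof (cases "i + 1 = j")
      case False
      then have "u (i + 1) < u j" using mono ij by (intro strict_mono_onD[OF mono]) auto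
      then show ?thesis by simp
    qed simp
    then show ?thesis using ij by (auto simp: Pset_def split: if_splits)
  qed
  show "\<forall>i\<in>{1..l}. \<forall>j\<in>{1..l}. i \<noteq> j \<longrightarrow> Pset \<tau> u l b C i \<inter> Pset \<tau> u l b C j = {}"
  proof (intro ballI impI)
    fix i j assume "i \<in> {1..l}" "j \<in> {1..l}" "i \<noteq> j"
    then show "Pset \<tau> u l b C i \<inter> Pset \<tau> u l b C j = {}"
      using disj[of i j] disj[of j i] by (cases "i < j") auto
  qed
qed

lemma sum_xcode:
  assumes u1: "u 1 = a" and ul: "u (l + 1) = b" and mono: "strict_mono_on {1..l + 1} u"
    and ab: "a < b" and code: "\<forall>z\<in>C. \<forall>w\<in>C. z \<noteq> w \<longrightarrow> a \<le> \<tau> z w \<and> \<tau> z w \<le> b"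
    and C: "finite C"
  shows "(\<Sum>i=1..l. xcode \<tau> u l b C i d) = (\<Sum>zw\<in>{(z, w). z \<in> C \<and> w \<in> C \<and> z \<noteq> w}. \<tau> (fst zw) (snd zw) ^ d)"
proof -
  have fin: "\<forall>i\<in>{1..l}. finite (Pset \<tau> u l b C i)"
    using C by (auto intro: finite_subset[of _ "C \<times> C"] simp: Pset_def)
  show ?thesis
    unfolding xcode_Pset Pset_partition(1)[OF assms(1-5), symmetric]
    by (rule sum.UNION_disjoint[symmetric, OF _ fin Pset_partition(2)[OF assms(1-5)]]) simp
qed

lemma G_psd:
  fixes \<tau> :: "'a \<Rightarrow> 'a \<Rightarrow> real"
  assumes Phi_psd: "\<And>N (xs :: nat \<Rightarrow> 'a). inj_on xs {..<N} \<Longrightarrow> psd N (\<lambda>i j. Phi p k (\<tau> (xs i) (xs j)))"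
    and tau_sym: "\<And>x y. \<tau> x y = \<tau> y x"
    and tau0: "\<And>x. \<tau> x x = \<tau>0"
    and norm: "Phi p k \<tau>0 = 1"
    and C: "finite C"
    and sumx: "\<And>d. (\<Sum>i'=1..l. x i' d) = (\<Sum>zw\<in>{(z, w). z \<in> C \<and> w \<in> C \<and> z \<noteq> w}. \<tau> (fst zw) (snd zw) ^ d)"
    and y: "\<And>i d. y i d = (\<Sum>z\<in>C. \<tau> z (q i) ^ d)"
    and c: "c = real (card C)"
  shows "psd (r + 1) (G_mat \<tau> p r q l c x y k)"
proof -
  let ?F = "\<lambda>s t. Phi p k (\<tau> s t)"
  define E1 where "E1 = (\<lambda>i. \<Sum>z\<in>C. ?F (q (Suc i)) z)"
  define E2 where "E2 = (\<Sum>z\<in>C. \<Sum>w\<in>C. ?F z w)"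
  have e1: "(\<Sum>d\<le>k. p k d * y (Suc i) d) = E1 i" for i
    unfolding E1_def Phi_def y by (simp add: sum_distrib_left sum.swap[of _ C] tau_sym)
  have off: "(\<Sum>zw\<in>{(z, w). z \<in> C \<and> w \<in> C \<and> z \<noteq> w}. g zw) = (\<Sum>z\<in>C. \<Sum>w\<in>C - {z}. g (z, w))" for g :: "'a \<times> 'a \<Rightarrow> real"
  proof -
    have "{(z, w). z \<in> C \<and> w \<in> C \<and> z \<noteq> w} = Sigma C (\<lambda>z. C - {z})" by auto
    then show ?thesis using C by (simp add: sum.Sigma)
  qed
  have e2: "c + (\<Sum>d\<le>k. p k d * (\<Sum>i'=1..l. x i' d)) = E2"
  proof -
    have "(\<Sum>d\<le>k. p k d * (\<Sum>i'=1..l. x i' d)) = (\<Sum>z\<in>C. \<Sum>w\<in>C - {z}. ?F z w)"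
      unfolding sumx off Phi_def by (simp add: sum_distrib_left sum.swap[of _ C] sum.swap[of _ "C - {z}" for z])
    moreover have "E2 = (\<Sum>z\<in>C. 1 + (\<Sum>w\<in>C - {z}. ?F z w))"
      unfolding E2_def using C by (intro sum.cong refl) (simp add: sum.remove tau0 norm)
    ultimately show ?thesis using c by (simp add: sum.distrib)
  qed
  show ?thesis unfolding psd_def
  proof (intro conjI allI impI)
    fix i j assume "i < r + 1" "j < r + 1"
    then show "G_mat \<tau> p r q l c x y k i j = G_mat \<tau> p r q l c x y k j i"
      by (simp add: G_mat_def tau_sym)
  next
    fix v :: "nat \<Rightarrow> real"
    have PP: "\<forall>N (xs :: nat \<Rightarrow> 'a). inj_on xs {..<N} \<longrightarrow> psd N (\<lambda>i j. Phi p k (\<tau> (xs i) (xs j)))"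
      using Phi_psd by blast
    define pts where "pts = (\<lambda>a. case a of Inl i \<Rightarrow> q (Suc i) | Inr z \<Rightarrow> (z::'a))"
    define W where "W = (\<lambda>a. case a of Inl i \<Rightarrow> v i | Inr (z::'a) \<Rightarrow> v r)"
    have "0 \<le> (\<Sum>a\<in>{..<r} <+> C. \<Sum>b\<in>{..<r} <+> C. W a * ?F (pts a) (pts b) * W b)"
      using gram_nonneg[OF PP, where I="{..<r} <+> C" and w=W and pts=pts] finite_Plus[of "{..<r}" C] C by simp
    also have "\<dots> = (\<Sum>i<r. (\<Sum>j<r. v i * ?F (q (Suc i)) (q (Suc j)) * v j) + (\<Sum>w\<in>C. v i * ?F (q (Suc i)) w * v r))
        + (\<Sum>z\<in>C. (\<Sum>j<r. v r * ?F z (q (Suc j)) * v j) + (\<Sum>w\<in>C. v r * ?F z w * v r))"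
      using C by (simp add: sum.Plus pts_def W_def comp_def)
    also have "\<dots> = (\<Sum>i<r. \<Sum>j<r. v i * ?F (q (Suc i)) (q (Suc j)) * v j)
        + (\<Sum>i<r. v i * E1 i * v r) + (\<Sum>j<r. v r * E1 j * v j) + v r * E2 * v r"
    proof -
      have t2: "(\<Sum>i<r. \<Sum>w\<in>C. v i * ?F (q (Suc i)) w * v r) = (\<Sum>i<r. v i * E1 i * v r)"
        unfolding E1_def by (simp add: sum_distrib_left sum_distrib_right)
      have t3: "(\<Sum>z\<in>C. \<Sum>j<r. v r * ?F z (q (Suc j)) * v j) = (\<Sum>j<r. v r * E1 j * v j)"
      proof -
        have "(\<Sum>z\<in>C. \<Sum>j<r. v r * ?F z (q (Suc j)) * v j) = (\<Sum>j<r. \<Sum>z\<in>C. v r * ?F (q (Suc j)) z * v j)"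
          by (subst sum.swap) (simp only: tau_sym[of _ "q _"])
        also have "\<dots> = (\<Sum>j<r. v r * E1 j * v j)"
          unfolding E1_def by (simp add: sum_distrib_left sum_distrib_right)
        finally show ?thesis .
      qed
      have t4: "(\<Sum>z\<in>C. \<Sum>w\<in>C. v r * ?F z w * v r) = v r * E2 * v r"
        unfolding E2_def by (simp add: sum_distrib_left sum_distrib_right)
      show ?thesis by (simp only: sum.distrib t2 t3 t4 add.assoc)
    qed
    also have "\<dots> = (\<Sum>i<r + 1. \<Sum>j<r + 1. v i * G_mat \<tau> p r q l c x y k i j * v j)"
      using e2 by (simp add: G_mat_def e1 sum.distrib)
    finally show "0 \<le> (\<Sum>i<r + 1. \<Sum>j<r + 1. v i * G_mat \<tau> p r q l c x y k i j * v j)" .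
  qed
qed

lemma ereal_lo: "(\<alpha>::ereal) \<le> ereal t \<Longrightarrow> \<alpha> \<noteq> -\<infinity> \<Longrightarrow> real_of_ereal \<alpha> \<le> t"
  by (cases \<alpha>) auto

lemma ereal_hi: "ereal t \<le> (\<beta>::ereal) \<Longrightarrow> \<beta> \<noteq> \<infinity> \<Longrightarrow> t \<le> real_of_ereal \<beta>"
  by (cases \<beta>) auto

theorem theorem7p2:
  fixes \<tau> :: "'a \<Rightarrow> 'a \<Rightarrow> real" and \<tau>0 :: real and p :: "nat \<Rightarrow> nat \<Rightarrow> real"
    and a b :: real and m r l :: nat and q :: "nat \<Rightarrow> 'a"
    and \<alpha> \<beta> :: "nat \<Rightarrow> ereal" and \<Pi> :: "'a set" and u :: "nat \<Rightarrow> real"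
    and Acon :: "real \<Rightarrow> (nat \<Rightarrow> nat \<Rightarrow> real) \<Rightarrow> bool"
  assumes tau_sym: "\<And>x y. \<tau> x y = \<tau> y x"
    and tau0: "\<And>x. \<tau> x x = \<tau>0"
    and deg: "\<And>k. p k k \<noteq> 0"
    and Phi_norm: "\<And>k. Phi p k \<tau>0 = 1"
    and Phi_psd: "\<And>k N (xs :: nat \<Rightarrow> 'a). inj_on xs {..<N} \<Longrightarrow>
                    psd N (\<lambda>i j. Phi p k (\<tau> (xs i) (xs j)))"
    and ab: "a < b"
    and m: "1 \<le> m"
    and \<alpha>\<beta>: "\<And>i. i \<in> {1..r} \<Longrightarrow> \<alpha> i \<le> \<beta> i"
    and \<Pi>: "\<Pi> \<subseteq> {x. \<forall>i\<in>{1..r}. \<alpha> i \<le> ereal (\<tau> x (q i)) \<and> ereal (\<tau> x (q i)) \<le> \<beta> i}"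
    and u1: "u 1 = a" and ul: "u (l + 1) = b"
    and u_mono: "strict_mono_on {1..l + 1} u"
    and Acon: "\<And>C. S_code \<tau> ({t. \<exists>x y. t = \<tau> x y} \<inter> {a..b}) C \<Longrightarrow> C \<subseteq> \<Pi> \<Longrightarrow>
                 Acon (real (card C)) (restr l m (xcode \<tau> u l b C))"
  shows "A_max \<tau> \<Pi> ({t. \<exists>x y. t = \<tau> x y} \<inter> {a..b}) \<le> c_star \<tau> p r q \<alpha> \<beta> l u Acon m"
proof -
  let ?S = "{t. \<exists>x y. t = \<tau> x y} \<inter> {a..b}"
  have m0: "0 < m" using m by simp
  have "{ereal (real (card C)) | C. S_code \<tau> ?S C \<and> C \<subseteq> \<Pi>}
        \<subseteq> {ereal c | c. \<exists>x y. feasible \<tau> p r q \<alpha> \<beta> l u Acon m c x y}"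
  proof (rule subsetI)
    fix e assume "e \<in> {ereal (real (card C)) | C. S_code \<tau> ?S C \<and> C \<subseteq> \<Pi>}"
    then obtain C where e: "e = ereal (real (card C))" and SC: "S_code \<tau> ?S C" and CP: "C \<subseteq> \<Pi>"
      by blast
    have fin: "finite C" using SC by (simp add: S_code_def)
    have code: "\<forall>z\<in>C. \<forall>w\<in>C. z \<noteq> w \<longrightarrow> a \<le> \<tau> z w \<and> \<tau> z w \<le> b"
      using SC by (auto simp: S_code_def)
    define x where "x = xcode \<tau> u l b C"
    define y where "y = (\<lambda>i k. \<Sum>z\<in>C. \<tau> z (q i) ^ k)"
    have "feasible \<tau> p r q \<alpha> \<beta> l u Acon m (real (card C)) x y"
      unfolding feasible_def
    proof (intro conjI ballI allI impI)
      fix i assume "i \<in> {1..r}"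
      show "y i 0 = real (card C)" by (simp add: y_def)
    next
      fix i assume i: "i \<in> {1..l}"
      show "H_psd m (x i) (ereal (u i)) (ereal (u (i + 1)))"
      proof (rule moment_H[OF m0, where E = "Pset \<tau> u l b C i" and f = "\<lambda>zw. \<tau> (fst zw) (snd zw)"])
        show "finite (Pset \<tau> u l b C i)"
          using fin by (auto intro: finite_subset[of _ "C \<times> C"] simp: Pset_def)
        show "x i = (\<lambda>k. \<Sum>e\<in>Pset \<tau> u l b C i. \<tau> (fst e) (snd e) ^ k)"
          by (simp add: x_def xcode_Pset fun_eq_iff)
        show "\<forall>e\<in>Pset \<tau> u l b C i. real_of_ereal (ereal (u i)) \<le> \<tau> (fst e) (snd e)"
          using i by (auto simp: Pset_def split: if_splits)
        show "\<forall>e\<in>Pset \<tau> u l b C i. \<tau> (fst e) (snd e) \<le> real_of_ereal (ereal (u (i + 1)))"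
          using i ul by (auto simp: Pset_def split: if_splits)
      qed
    next
      show "Acon (real (card C)) (restr l m x)" using Acon[OF SC CP] by (simp add: x_def)
    next
      fix k assume "k < 2 * m"
      show "psd (r + 1) (G_mat \<tau> p r q l (real (card C)) x y k)"
        apply (rule G_psd[where C = C])
              apply (rule Phi_psd, assumption)
             apply (rule tau_sym)
            apply (rule tau0)
           apply (rule Phi_norm)
          apply (rule fin)
         apply (unfold x_def, rule sum_xcode[OF u1 ul u_mono ab code fin])
        apply (simp add: y_def)
       apply simp
        done
    next
      fix i assume i: "i \<in> {1..r}"
      have pts: "\<forall>z\<in>C. \<alpha> i \<le> ereal (\<tau> z (q i)) \<and> ereal (\<tau> z (q i)) \<le> \<beta> i"
        using CP \<Pi> i by blast
      show "H_psd m (y i) (\<alpha> i) (\<beta> i)"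
      proof (rule moment_H[OF m0 fin, where f = "\<lambda>z. \<tau> z (q i)"])
        show "y i = (\<lambda>k. \<Sum>z\<in>C. \<tau> z (q i) ^ k)" by (simp add: y_def)
        show "\<forall>e\<in>C. real_of_ereal (\<alpha> i) \<le> \<tau> e (q i)" if "\<alpha> i \<noteq> -\<infinity>"
          using pts ereal_lo that by blast
        show "\<forall>e\<in>C. \<tau> e (q i) \<le> real_of_ereal (\<beta> i)" if "\<beta> i \<noteq> \<infinity>"
          using pts ereal_hi that by blast
      qed
    qed
    then show "e \<in> {ereal c | c. \<exists>x y. feasible \<tau> p r q \<alpha> \<beta> l u Acon m c x y}"
      using e by blast
  qed
  then show ?thesis unfolding A_max_def c_star_def by (rule Sup_subset_mono)
qed

end
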